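(* For every finite graph $G$, the poset $\mathrm{X}(G)$ deformation retracts (on geometric realisations) onto its subposet $\mathrm{C}(G)$.
   Context: Graphs are finite and may have loops and multiple edges. Subgraphs are edge-induced (no isolated vertices), so a subgraph is identified with a subset of $E(G)$. A core subgraph of $G$ is a proper subgraph $H$ such that each connected component of $H$ has non-trivial fundamental group and no vertex of $H$ has valence one in $H$ (separating edges are allowed). $\mathrm{X}(G)$ is the poset, under inclusion, of proper non-empty subgraphs of $G$ at least one connected component of which has non-trivial fundamental group; $\mathrm{C}(G)$ is the poset of proper core subgraphs of $G$ under inclusion. *)

theory Defs
  imports "HOL-Analysis.Analysis"
begin

text \<open>A graph is given by a vertex set V, an edge set E and an endpoint map
  ends assigning to every edge its (unordered) pair of endpoints, encoded as an
  ordered pair; a loop has both endpoints equal.  A subgraph is identified with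
  its set of edges (edge-induced).\<close>

definition finite_graph :: "'v set \<Rightarrow> 'e set \<Rightarrow> ('e \<Rightarrow> 'v \<times> 'v) \<Rightarrow> bool" where
  "finite_graph V E ends \<longleftrightarrow> finite V \<and> finite E \<and> (\<forall>e\<in>E. fst (ends e) \<in> V \<and> snd (ends e) \<in> V)"

definition endpoints :: "('e \<Rightarrow> 'v \<times> 'v) \<Rightarrow> 'e \<Rightarrow> 'v set" where
  "endpoints ends e = {fst (ends e), snd (ends e)}"

definition sub_verts :: "('e \<Rightarrow> 'v \<times> 'v) \<Rightarrow> 'e set \<Rightarrow> 'v set" where
  "sub_verts ends H = (\<Union>e\<in>H. endpoints ends e)"

text \<open>Valence of v in H: number of edge-ends at v (a loop contributes 2).\<close>
definition valence :: "('e \<Rightarrow> 'v \<times> 'v) \<Rightarrow> 'e set \<Rightarrow> 'v \<Rightarrow> nat" where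
  "valence ends H v = card {e\<in>H. fst (ends e) = v} + card {e\<in>H. snd (ends e) = v}"

definition edge_adj :: "('e \<Rightarrow> 'v \<times> 'v) \<Rightarrow> 'e set \<Rightarrow> ('e \<times> 'e) set" where
  "edge_adj ends H = {(e, f). e \<in> H \<and> f \<in> H \<and> endpoints ends e \<inter> endpoints ends f \<noteq> {}}"

definition components :: "('e \<Rightarrow> 'v \<times> 'v) \<Rightarrow> 'e set \<Rightarrow> 'e set set" where
  "components ends H = {{f \<in> H. (e, f) \<in> (edge_adj ends H)\<^sup>*} | e. e \<in> H}"

text \<open>A finite connected graph with edge set C has fundamental group free of
  rank |E| - |V| + 1; hence it is non-trivial iff |E| >= |V|, i.e. iff the
  component is not a tree.\<close>
definition nontrivial_pi1 :: "('e \<Rightarrow> 'v \<times> 'v) \<Rightarrow> 'e set \<Rightarrow> bool" where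
  "nontrivial_pi1 ends C \<longleftrightarrow> card (sub_verts ends C) \<le> card C"

definition X_poset :: "('e \<Rightarrow> 'v \<times> 'v) \<Rightarrow> 'e set \<Rightarrow> 'e set set" where
  "X_poset ends E = {H. H \<subseteq> E \<and> H \<noteq> E \<and> H \<noteq> {} \<and>
      (\<exists>C\<in>components ends H. nontrivial_pi1 ends C)}"

definition core_subgraph :: "('e \<Rightarrow> 'v \<times> 'v) \<Rightarrow> 'e set \<Rightarrow> 'e set \<Rightarrow> bool" where
  "core_subgraph ends E H \<longleftrightarrow> H \<subseteq> E \<and> H \<noteq> E \<and> H \<noteq> {} \<and>
      (\<forall>C\<in>components ends H. nontrivial_pi1 ends C) \<and>
      (\<forall>v\<in>sub_verts ends H. valence ends H v \<noteq> 1)"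

definition C_poset :: "('e \<Rightarrow> 'v \<times> 'v) \<Rightarrow> 'e set \<Rightarrow> 'e set set" where
  "C_poset ends E = {H. core_subgraph ends E H}"

text \<open>Points of the realisation of the order complex of P: weight functions
  t >= 0, vanishing outside P, summing to 1 over P, whose support is a chain.
  The topology is the subspace topology of the product topology on functions,
  which on these points agrees with the Euclidean topology of the finitely many
  coordinates in P.  For a subposet Q of P, the realisation of Q is then
  literally the subspace of points supported in Q.\<close>
definition realisation_points :: "'a set set \<Rightarrow> ('a set \<Rightarrow> real) set" where
  "realisation_points P = {t. (\<forall>x. 0 \<le> t x) \<and> (\<forall>x. x \<notin> P \<longrightarrow> t x = 0) \<and>
      sum t P = 1 \<and> (\<forall>x\<in>P. \<forall>y\<in>P. 0 < t x \<and> 0 < t y \<longrightarrow> x \<subseteq> y \<or> y \<subseteq> x)}"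

definition realisation :: "'a set set \<Rightarrow> ('a set \<Rightarrow> real) topology" where
  "realisation P = subtopology (powertop_real UNIV) (realisation_points P)"

definition deformation_retract_space :: "'a set \<Rightarrow> 'a topology \<Rightarrow> bool" where
  "deformation_retract_space S X \<longleftrightarrow> S \<subseteq> topspace X \<and>
     (\<exists>r. homotopic_with (\<lambda>h. \<forall>x\<in>S. h x = x) X X id r \<and>
          retraction_maps X (subtopology X S) r id)"

end

theory Submission
  imports Defs
begin


definition good :: "('e \<Rightarrow> 'v \<times> 'v) \<Rightarrow> 'e set \<Rightarrow> bool" where
  "good ends K \<longleftrightarrow> (\<forall>v\<in>sub_verts ends K. 2 \<le> valence ends K v)"

definition core :: "('e \<Rightarrow> 'v \<times> 'v) \<Rightarrow> 'e set \<Rightarrow> 'e set" where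
  "core ends H = \<Union>{K. K \<subseteq> H \<and> good ends K}"

lemma finite_sub_verts: "finite K \<Longrightarrow> finite (sub_verts ends K)"
  unfolding sub_verts_def endpoints_def by auto

lemma valence_mono: "K \<subseteq> H \<Longrightarrow> finite H \<Longrightarrow> valence ends K v \<le> valence ends H v"
  unfolding valence_def
  by (intro add_mono card_mono) (auto intro: finite_subset)

lemma valence_pos: "finite H \<Longrightarrow> v \<in> sub_verts ends H \<Longrightarrow> 1 \<le> valence ends H v"
proof -
  assume fH: "finite H" and "v \<in> sub_verts ends H"
  then obtain e where e: "e \<in> H" "v = fst (ends e) \<or> v = snd (ends e)"
    unfolding sub_verts_def endpoints_def by auto
  then have "{e\<in>H. fst (ends e) = v} \<noteq> {} \<or> {e\<in>H. snd (ends e) = v} \<noteq> {}" by auto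
  then have "card {e\<in>H. fst (ends e) = v} \<noteq> 0 \<or> card {e\<in>H. snd (ends e) = v} \<noteq> 0"
    using fH by auto
  then show ?thesis unfolding valence_def by auto
qed

lemma core_sub: "core ends H \<subseteq> H"
  unfolding core_def by auto

lemma core_mono: "H \<subseteq> H' \<Longrightarrow> core ends H \<subseteq> core ends H'"
  unfolding core_def by auto

lemma good_core: assumes fH: "finite H" shows "good ends (core ends H)"
  unfolding good_def
proof
  fix v assume "v \<in> sub_verts ends (core ends H)"
  then obtain e where "e \<in> core ends H" "v \<in> endpoints ends e" unfolding sub_verts_def by auto
  then obtain K where K: "K \<subseteq> H" "good ends K" "e \<in> K" unfolding core_def by auto
  then have "v \<in> sub_verts ends K" using \<open>v \<in> endpoints ends e\<close> unfolding sub_verts_def by auto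
  then have "2 \<le> valence ends K v" using K unfolding good_def by auto
  also have "\<dots> \<le> valence ends (core ends H) v"
    by (rule valence_mono) (use K core_sub fH in \<open>auto simp: core_def intro: finite_subset\<close>)
  finally show "2 \<le> valence ends (core ends H) v" .
qed

lemma good_sub_core: "K \<subseteq> H \<Longrightarrow> good ends K \<Longrightarrow> K \<subseteq> core ends H"
  unfolding core_def by auto

lemma exists_good:
  "finite H \<Longrightarrow> H \<noteq> {} \<Longrightarrow> card (sub_verts ends H) \<le> card H \<Longrightarrow> \<exists>K\<subseteq>H. K \<noteq> {} \<and> good ends K"
proof (induction "card H" arbitrary: H rule: less_induct)
  case less
  show ?case
  proof (cases "good ends H")
    case True then show ?thesis using less.prems by blast
  next
    case False
    then obtain v where v: "v \<in> sub_verts ends H" "valence ends H v < 2" unfolding good_def by auto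
    define A where "A = {e\<in>H. fst (ends e) = v}"
    define B where "B = {e\<in>H. snd (ends e) = v}"
    have fA: "finite A" "finite B" using less.prems(1) by (auto simp: A_def B_def)
    have "card A + card B = 1" using v valence_pos[OF less.prems(1) v(1)]
      unfolding valence_def A_def B_def by simp
    then have "(card A = 1 \<and> card B = 0) \<or> (card A = 0 \<and> card B = 1)" by auto
    then obtain e where AB: "A \<union> B = {e}" and nl: "\<not> (fst (ends e) = v \<and> snd (ends e) = v)"
    proof (elim disjE conjE)
      assume "card A = 1" "card B = 0"
      then obtain e where "A = {e}" "B = {}" using fA by (auto simp: card_1_singleton_iff)
      then show ?thesis using that[of e] unfolding A_def B_def by auto
    next
      assume "card A = 0" "card B = 1"
      then obtain e where "B = {e}" "A = {}" using fA by (auto simp: card_1_singleton_iff)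
      then show ?thesis using that[of e] unfolding A_def B_def by auto
    qed
    have eH: "e \<in> H" and ve: "v \<in> endpoints ends e" using AB unfolding A_def B_def endpoints_def by auto
    define H' where "H' = H - {e}"
    have notv: "v \<notin> endpoints ends e'" if "e' \<in> H'" for e'
    proof
      assume "v \<in> endpoints ends e'"
      then have "e' \<in> A \<union> B" using that unfolding A_def B_def H'_def endpoints_def by auto
      then show False using AB that unfolding H'_def by auto
    qed
    have svs: "sub_verts ends H' \<subseteq> sub_verts ends H - {v}"
      using notv unfolding sub_verts_def H'_def by auto
    have fsv: "finite (sub_verts ends H)" using finite_sub_verts less.prems(1) by auto
    have c1: "card (sub_verts ends H') < card (sub_verts ends H)"
      by (rule psubset_card_mono[OF fsv]) (use svs v(1) in auto)
    have cH': "card H' = card H - 1" using eH less.prems(1) unfolding H'_def by simp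
    have ne: "H' \<noteq> {}"
    proof
      assume "H' = {}"
      then have "H = {e}" using eH unfolding H'_def by auto
      then have "sub_verts ends H = {fst (ends e), snd (ends e)}" unfolding sub_verts_def endpoints_def by auto
      moreover have "fst (ends e) \<noteq> snd (ends e)" using nl ve unfolding endpoints_def by auto
      ultimately have "card (sub_verts ends H) = 2" by simp
      then show False using less.prems(3) \<open>H = {e}\<close> by simp
    qed
    have "card (sub_verts ends H') \<le> card H'" using c1 cH' less.prems(3) by linarith
    moreover have "card H' < card H"
    proof -
      have "0 < card H" using eH less.prems(1) card_gt_0_iff by blast
      then show ?thesis using cH' by linarith
    qed
    moreover have "finite H'" using less.prems(1) unfolding H'_def by auto
    ultimately have "\<exists>K\<subseteq>H'. K \<noteq> {} \<and> good ends K" using less.hyps[of H'] ne by simp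
    then obtain K where "K \<subseteq> H'" "K \<noteq> {}" "good ends K" by blast
    then show ?thesis unfolding H'_def by blast
  qed
qed

lemma comp_props:
  assumes C: "C \<in> components ends K"
  shows "C \<subseteq> K" "C \<noteq> {}"
    "\<And>e g. e \<in> C \<Longrightarrow> g \<in> K \<Longrightarrow> endpoints ends e \<inter> endpoints ends g \<noteq> {} \<Longrightarrow> g \<in> C"
proof -
  obtain e0 where C_def: "C = {f \<in> K. (e0, f) \<in> (edge_adj ends K)\<^sup>*}" and e0: "e0 \<in> K"
    using C unfolding components_def by auto
  show "C \<subseteq> K" unfolding C_def by auto
  show "C \<noteq> {}" using e0 unfolding C_def by auto
  fix e g assume "e \<in> C" "g \<in> K" "endpoints ends e \<inter> endpoints ends g \<noteq> {}"
  then have "(e0, e) \<in> (edge_adj ends K)\<^sup>*" "(e, g) \<in> edge_adj ends K"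
    unfolding C_def edge_adj_def by auto
  then have "(e0, g) \<in> (edge_adj ends K)\<^sup>*" by simp
  then show "g \<in> C" using \<open>g \<in> K\<close> unfolding C_def by auto
qed

lemma handshake_fst:
  assumes "finite C"
  shows "(\<Sum>v\<in>sub_verts ends C. card {e\<in>C. fst (ends e) = v}) = card C"
proof -
  have "(\<Sum>v\<in>sub_verts ends C. \<Sum>e\<in>{e\<in>C. fst (ends e) = v}. (1::nat)) = (\<Sum>e\<in>C. 1)"
    by (rule sum.group) (use assms finite_sub_verts in \<open>auto simp: sub_verts_def endpoints_def\<close>)
  then show ?thesis by simp
qed

lemma handshake_snd:
  assumes "finite C"
  shows "(\<Sum>v\<in>sub_verts ends C. card {e\<in>C. snd (ends e) = v}) = card C"
proof -
  have "(\<Sum>v\<in>sub_verts ends C. \<Sum>e\<in>{e\<in>C. snd (ends e) = v}. (1::nat)) = (\<Sum>e\<in>C. 1)"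
    by (rule sum.group) (use assms finite_sub_verts in \<open>auto simp: sub_verts_def endpoints_def\<close>)
  then show ?thesis by simp
qed

lemma good_comp_nontrivial:
  assumes fK: "finite K" and g: "good ends K" and C: "C \<in> components ends K"
  shows "nontrivial_pi1 ends C"
proof -
  note cp = comp_props[OF C]
  have fC: "finite C" using cp(1) fK finite_subset by auto
  have val: "valence ends C v = valence ends K v" if v: "v \<in> sub_verts ends C" for v
  proof -
    obtain e where e: "e \<in> C" "v \<in> endpoints ends e" using v unfolding sub_verts_def by auto
    have "{e\<in>C. fst (ends e) = v} = {e\<in>K. fst (ends e) = v}"
      using cp(1) cp(3)[OF e(1)] e(2) unfolding endpoints_def by auto
    moreover have "{e\<in>C. snd (ends e) = v} = {e\<in>K. snd (ends e) = v}"
      using cp(1) cp(3)[OF e(1)] e(2) unfolding endpoints_def by auto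
    ultimately show ?thesis unfolding valence_def by simp
  qed
  have "(\<Sum>v\<in>sub_verts ends C. (2::nat)) \<le> (\<Sum>v\<in>sub_verts ends C. valence ends C v)"
  proof (rule sum_mono)
    fix v assume v: "v \<in> sub_verts ends C"
    then have "v \<in> sub_verts ends K" using cp(1) unfolding sub_verts_def by auto
    then show "2 \<le> valence ends C v" using g val[OF v] unfolding good_def by auto
  qed
  also have "\<dots> = card C + card C"
    unfolding valence_def sum.distrib handshake_fst[OF fC] handshake_snd[OF fC] ..
  finally show ?thesis unfolding nontrivial_pi1_def by simp
qed



locale retr =
  fixes P Q :: "'a set set" and f :: "'a set \<Rightarrow> 'a set"
  assumes finP: "finite P" and QP: "Q \<subseteq> P"
    and fQ: "\<And>x. x \<in> P \<Longrightarrow> f x \<in> Q"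
    and fsub: "\<And>x. x \<in> P \<Longrightarrow> f x \<subseteq> x"
    and fmono: "\<And>x y. x \<in> P \<Longrightarrow> y \<in> P \<Longrightarrow> x \<subseteq> y \<Longrightarrow> f x \<subseteq> f y"
    and fid: "\<And>x. x \<in> Q \<Longrightarrow> f x = x"
begin

definition bb :: "('a set \<Rightarrow> real) \<Rightarrow> 'a set \<Rightarrow> real" where
  "bb t x = (\<Sum>z\<in>{z\<in>P. z \<subset> x}. t z)"
definition aa :: "real \<Rightarrow> ('a set \<Rightarrow> real) \<Rightarrow> 'a set \<Rightarrow> real" where
  "aa s t x = min (t x) (max 0 (s - bb t x))"
definition FF :: "real \<Rightarrow> ('a set \<Rightarrow> real) \<Rightarrow> 'a set \<Rightarrow> real" where
  "FF s t y = (\<Sum>x\<in>{x\<in>P. f x = y}. aa s t x) + (t y - aa s t y)"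

lemma RP_D:
  assumes "t \<in> realisation_points P"
  shows "\<And>x. 0 \<le> t x" "\<And>x. x \<notin> P \<Longrightarrow> t x = 0" "sum t P = 1"
    "\<And>x y. x\<in>P \<Longrightarrow> y\<in>P \<Longrightarrow> 0 < t x \<Longrightarrow> 0 < t y \<Longrightarrow> x \<subseteq> y \<or> y \<subseteq> x"
  using assms unfolding realisation_points_def by auto

lemma bb_nonneg: "t \<in> realisation_points P \<Longrightarrow> 0 \<le> bb t x"
  unfolding bb_def by (rule sum_nonneg) (auto dest: RP_D)

lemma aa_nonneg: "t \<in> realisation_points P \<Longrightarrow> 0 \<le> aa s t x"
  unfolding aa_def by (auto dest: RP_D)

lemma aa_le: "aa s t x \<le> t x"
  unfolding aa_def by auto

lemma bb_step:
  assumes t: "t \<in> realisation_points P" and y: "y \<in> P" and yx: "y \<subset> x"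
  shows "bb t y + t y \<le> bb t x"
proof -
  have "bb t y + t y = sum t (insert y {z\<in>P. z \<subset> y})"
    unfolding bb_def using finP by (subst sum.insert) auto
  also have "\<dots> \<le> sum t {z\<in>P. z \<subset> x}"
    by (rule sum_mono2) (use finP y yx RP_D(1)[OF t] in auto)
  finally show ?thesis unfolding bb_def .
qed

lemma bb_top:
  assumes t: "t \<in> realisation_points P"
  shows "bb t y + t y \<le> 1"
proof (cases "y \<in> P")
  case True
  have "bb t y + t y = sum t (insert y {z\<in>P. z \<subset> y})"
    unfolding bb_def using finP by (subst sum.insert) auto
  also have "\<dots> \<le> sum t P"
    by (rule sum_mono2) (use finP True RP_D(1)[OF t] in auto)
  finally show ?thesis using RP_D(3)[OF t] by simp
next
  case False
  then have "bb t y \<le> sum t P" unfolding bb_def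
    by (intro sum_mono2) (use finP RP_D(1)[OF t] in auto)
  then show ?thesis using RP_D(2,3)[OF t] False by simp
qed

lemma aa0: "t \<in> realisation_points P \<Longrightarrow> aa 0 t x = 0"
  unfolding aa_def using bb_nonneg[of t x] RP_D(1)[of t x] by auto

lemma aa1: "t \<in> realisation_points P \<Longrightarrow> aa 1 t x = t x"
  unfolding aa_def using bb_top[of t x] RP_D(1)[of t x] by auto

lemma aa_zero: "t \<in> realisation_points P \<Longrightarrow> t x = 0 \<Longrightarrow> aa s t x = 0"
  unfolding aa_def by auto

lemma FF0: "t \<in> realisation_points P \<Longrightarrow> FF 0 t = t"
  unfolding FF_def by (auto simp: aa0 fun_eq_iff)

lemma sum_filter_eq: "(\<Sum>x\<in>{x\<in>P. f x = y}. g x) = (\<Sum>x\<in>P. if f x = y then g x else 0)"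
  by (simp add: sum.inter_filter finP)

lemma FF_fix:
  assumes t: "t \<in> realisation_points Q"
  shows "FF s t = t"
proof -
  have tP: "t \<in> realisation_points P"
  proof -
    have "sum t P = sum t Q"
      using t QP finP unfolding realisation_points_def
      by (intro sum.mono_neutral_right) auto
    moreover have "x \<in> Q" if "0 < t x" for x using t that unfolding realisation_points_def by force
    ultimately show ?thesis using t QP unfolding realisation_points_def
      by (simp add: subset_eq) (meson less_le_not_le)
  qed
  show ?thesis
  proof
    fix y
    have "(\<Sum>x\<in>P. if f x = y then aa s t x else 0) = (\<Sum>x\<in>P. if x = y then aa s t x else 0)"
    proof (rule sum.cong)
      fix x assume "x \<in> P"
      show "(if f x = y then aa s t x else 0) = (if x = y then aa s t x else 0)"
      proof (cases "x \<in> Q")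
        case True then show ?thesis using fid by auto
      next
        case False
        then have "t x = 0" using t unfolding realisation_points_def by auto
        then show ?thesis using aa_zero[OF tP] by auto
      qed
    qed simp
    also have "\<dots> = aa s t y"
      using finP aa_zero[OF tP, of y] RP_D(2)[OF tP, of y] by (auto simp: sum.delta)
    finally show "FF s t y = t y" unfolding FF_def sum_filter_eq by simp
  qed
qed

lemma FF_mem:
  assumes t: "t \<in> realisation_points P" and s: "s \<in> {0..1}"
  shows "FF s t \<in> realisation_points P"
proof -
  note RP = RP_D[OF t]
  have nn: "0 \<le> FF s t y" for y
  proof -
    have "0 \<le> (\<Sum>x\<in>{x\<in>P. f x = y}. aa s t x)" by (rule sum_nonneg) (rule aa_nonneg[OF t])
    moreover have "0 \<le> t y - aa s t y" using aa_le[of s t y] by simp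
    ultimately show ?thesis unfolding FF_def by simp
  qed
  have out: "FF s t y = 0" if "y \<notin> P" for y
  proof -
    have e: "{x\<in>P. f x = y} = {}" using fQ QP that by auto
    show ?thesis unfolding FF_def e using aa_zero[OF t] RP(2)[OF that] by simp
  qed
  have "sum (FF s t) P = (\<Sum>y\<in>P. \<Sum>x\<in>{x\<in>P. f x = y}. aa s t x) + (\<Sum>y\<in>P. t y - aa s t y)"
    unfolding FF_def by (simp add: sum.distrib)
  also have "(\<Sum>y\<in>P. \<Sum>x\<in>{x\<in>P. f x = y}. aa s t x) = (\<Sum>x\<in>P. aa s t x)"
    by (rule sum.group) (use finP fQ QP in auto)
  finally have sum1: "sum (FF s t) P = 1"
    using RP(3) by (simp add: sum_subtractf)
  have pos: "(\<exists>x\<in>P. f x = y \<and> 0 < t x \<and> bb t x < s) \<or> (0 < t y \<and> s < bb t y + t y)"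
    if "0 < FF s t y" for y
  proof (cases "(\<Sum>x\<in>{x\<in>P. f x = y}. aa s t x) = 0")
    case True
    then have "0 < t y - aa s t y" using that unfolding FF_def by simp
    then have "0 < t y \<and> s < bb t y + t y" using RP(1)[of y] unfolding aa_def by (auto simp: min_def max_def split: if_splits)
    then show ?thesis by blast
  next
    case False
    then obtain x where "x \<in> {x\<in>P. f x = y}" "aa s t x \<noteq> 0"
      by (rule sum.not_neutral_contains_not_neutral)
    moreover from this(2) have "0 < t x \<and> bb t x < s" using RP(1)[of x] unfolding aa_def by (auto simp: min_def max_def split: if_splits)
    ultimately show ?thesis by blast
  qed
  have inP: "t x > 0 \<Longrightarrow> x \<in> P" for x using RP(2)[of x] by auto
  have chain: "y1 \<subseteq> y2 \<or> y2 \<subseteq> y1" if "0 < FF s t y1" "0 < FF s t y2" for y1 y2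
  proof -
    have mixed: "f x \<subseteq> y \<or> y \<subseteq> f x" if "x \<in> P" "0 < t x" "bb t x < s" "0 < t y" "s < bb t y + t y" for x y
    proof -
      have "y \<in> P" using inP that by auto
      then have "x \<subseteq> y \<or> y \<subseteq> x" using RP(4) that by auto
      moreover have False if "y \<subset> x"
        using bb_step[OF t \<open>y \<in> P\<close> that] \<open>bb t x < s\<close> \<open>s < bb t y + t y\<close> by simp
      ultimately have "x \<subseteq> y" by blast
      then show ?thesis using fsub[OF \<open>x \<in> P\<close>] by blast
    qed
    show ?thesis
    proof (cases "\<exists>x\<in>P. f x = y1 \<and> 0 < t x \<and> bb t x < s")
      case True
      then obtain x1 where x1: "x1 \<in> P" "f x1 = y1" "0 < t x1" "bb t x1 < s" by blast
      show ?thesis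
      proof (cases "\<exists>x\<in>P. f x = y2 \<and> 0 < t x \<and> bb t x < s")
        case True
        then obtain x2 where x2: "x2 \<in> P" "f x2 = y2" "0 < t x2" "bb t x2 < s" by blast
        have "x1 \<subseteq> x2 \<or> x2 \<subseteq> x1" using RP(4)[OF x1(1) x2(1) x1(3) x2(3)] .
        then show ?thesis using fmono[OF x1(1) x2(1)] fmono[OF x2(1) x1(1)] x1(2) x2(2) by blast
      next
        case False
        then have "0 < t y2 \<and> s < bb t y2 + t y2" using pos[OF that(2)] by blast
        then show ?thesis using mixed[OF x1(1) x1(3) x1(4)] x1(2) by blast
      qed
    next
      case False
      then have y1: "0 < t y1 \<and> s < bb t y1 + t y1" using pos[OF that(1)] by blast
      show ?thesis
      proof (cases "\<exists>x\<in>P. f x = y2 \<and> 0 < t x \<and> bb t x < s")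
        case True
        then obtain x2 where x2: "x2 \<in> P" "f x2 = y2" "0 < t x2" "bb t x2 < s" by blast
        then show ?thesis using mixed[OF x2(1) x2(3) x2(4)] y1 by blast
      next
        case False
        then have "0 < t y2" using pos[OF that(2)] by blast
        then show ?thesis using RP(4)[of y1 y2] inP y1 by blast
      qed
    qed
  qed
  show ?thesis unfolding realisation_points_def using nn out sum1 chain by simp
qed

lemma FF1_mem:
  assumes t: "t \<in> realisation_points P"
  shows "FF 1 t \<in> realisation_points Q"
proof -
  have m: "FF 1 t \<in> realisation_points P" using FF_mem[OF t] by auto
  have out: "FF 1 t y = 0" if "y \<notin> Q" for y
  proof -
    have e: "{x\<in>P. f x = y} = {}" using fQ that by auto
    show ?thesis unfolding FF_def e using aa1[OF t] by simp
  qed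
  have "sum (FF 1 t) Q = sum (FF 1 t) P"
    using finP QP out by (intro sum.mono_neutral_left) auto
  moreover have "\<forall>x\<in>Q. \<forall>y\<in>Q. 0 < FF 1 t x \<and> 0 < FF 1 t y \<longrightarrow> x \<subseteq> y \<or> y \<subseteq> x"
    using m QP unfolding realisation_points_def by blast
  ultimately show ?thesis using m out unfolding realisation_points_def by simp
qed

lemma topspace_real: "topspace (realisation P) = realisation_points P"
  unfolding realisation_def by simp

lemma cont_coord:
  "continuous_map (prod_topology (top_of_set {0..1::real}) (realisation P)) euclideanreal (\<lambda>p. snd p z)"
proof -
  have "continuous_map (realisation P) euclideanreal (\<lambda>t. t z)"
    unfolding realisation_def
    by (rule continuous_map_from_subtopology) (rule continuous_map_product_projection[where X="\<lambda>i. euclideanreal", OF UNIV_I])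
  then show ?thesis using continuous_map_compose[OF continuous_map_snd] by (simp add: o_def)
qed

lemma cont_fst:
  "continuous_map (prod_topology (top_of_set {0..1::real}) (realisation P)) euclideanreal fst"
  using continuous_map_compose[OF continuous_map_fst continuous_map_from_subtopology[OF continuous_map_id]]
  by (simp add: o_def)

lemma cont_FF:
  "continuous_map (prod_topology (top_of_set {0..1::real}) (realisation P)) (powertop_real UNIV)
     (\<lambda>p. FF (fst p) (snd p))"
proof -
  let ?Z = "prod_topology (top_of_set {0..1::real}) (realisation P)"
  have fc: "finite {x\<in>P. Q' x}" for Q' using finP by simp
  have cc: "continuous_map ?Z euclideanreal (\<lambda>p. c)" for c :: real
    by simp
  have cb: "continuous_map ?Z euclideanreal (\<lambda>p. bb (snd p) x)" for x
    unfolding bb_def by (rule continuous_map_sum[OF fc]) (rule cont_coord)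
  have ca: "continuous_map ?Z euclideanreal (\<lambda>p. aa (fst p) (snd p) x)" for x
    unfolding aa_def
    by (intro continuous_map_real_min continuous_map_real_max continuous_map_diff cb cc cont_coord cont_fst)
  show ?thesis unfolding continuous_map_componentwise_UNIV FF_def
    by (intro allI continuous_map_add continuous_map_diff continuous_map_sum[OF fc] ca cont_coord)
qed

lemma RPQ_sub: "realisation_points Q \<subseteq> realisation_points P"
proof
  fix t assume t: "t \<in> realisation_points Q"
  have "sum t P = sum t Q"
    using t QP finP unfolding realisation_points_def
    by (intro sum.mono_neutral_right) auto
  moreover have "x \<in> Q" if "0 < t x" for x using t that unfolding realisation_points_def by force
  ultimately show "t \<in> realisation_points P" using t QP unfolding realisation_points_def
    by (simp add: subset_eq) (meson less_le_not_le)
qed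

lemma cont_FF_R:
  "continuous_map (prod_topology (top_of_set {0..1::real}) (realisation P)) (realisation P)
     (\<lambda>p. FF (fst p) (snd p))"
proof -
  show ?thesis
    unfolding realisation_def using cont_FF[unfolded realisation_def] FF_mem
    by (auto simp: continuous_map_in_subtopology realisation_points_def[symmetric])
qed

lemma deform: "deformation_retract_space (realisation_points Q) (realisation P)"
proof -
  define h where "h = (\<lambda>(s,t). if t \<in> realisation_points P then FF s t else t)"
  define r where "r = (\<lambda>t. h (1::real,t))"
  have ch: "continuous_map (prod_topology (top_of_set {0..1::real}) (realisation P)) (realisation P) h"
    by (rule continuous_map_eq[OF cont_FF_R]) (auto simp: h_def topspace_real)
  have hom: "homotopic_with (\<lambda>k. \<forall>x\<in>realisation_points Q. k x = x) (realisation P) (realisation P) id r"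
    unfolding homotopic_with_def
  proof (intro exI conjI allI ballI)
    show "continuous_map (prod_topology (top_of_set {0..1::real}) (realisation P)) (realisation P) h" by (rule ch)
    show "h (0, x) = id x" for x by (simp add: h_def FF0)
    show "h (1, x) = r x" for x by (simp add: r_def)
    show "h (s, x) = x" if "x \<in> realisation_points Q" for s x
      using that RPQ_sub FF_fix by (auto simp: h_def)
  qed
  have cr0: "continuous_map (realisation P) (realisation P) r"
  proof -
    have "continuous_map (realisation P) (prod_topology (top_of_set {0..1::real}) (realisation P)) (\<lambda>t. (1::real, t))"
      by (intro continuous_map_pairedI continuous_map_id[unfolded id_def]) (simp add: topspace_real)
    from continuous_map_compose[OF this ch] show ?thesis unfolding r_def by (simp add: o_def)
  qed
  have "r ` topspace (realisation P) \<subseteq> realisation_points Q"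
    using FF1_mem by (auto simp: r_def h_def topspace_real)
  then have cr: "continuous_map (realisation P) (subtopology (realisation P) (realisation_points Q)) r"
    using cr0 by (simp add: continuous_map_in_subtopology image_subset_iff_funcset)
  have ret: "retraction_maps (realisation P) (subtopology (realisation P) (realisation_points Q)) r id"
    unfolding retraction_maps_def
    using cr continuous_map_from_subtopology[OF continuous_map_id] RPQ_sub FF_fix
    by (auto simp: r_def h_def topspace_real)
  show ?thesis unfolding deformation_retract_space_def
    using hom ret RPQ_sub by (auto simp: topspace_real)
qed

end


theorem lemma4:
  fixes V :: "'v set" and E :: "'e set" and ends :: "'e \<Rightarrow> 'v \<times> 'v"
  assumes "finite_graph V E ends"
  shows "deformation_retract_space (realisation_points (C_poset ends E))
           (realisation (X_poset ends E))"
proof -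
  have fE: "finite E" using assms unfolding finite_graph_def by auto
  have QX: "H \<in> X_poset ends E" if "H \<in> C_poset ends E" for H
  proof -
    have H: "H \<subseteq> E" "H \<noteq> E" "H \<noteq> {}" "\<forall>C\<in>components ends H. nontrivial_pi1 ends C"
      using that unfolding C_poset_def core_subgraph_def by auto
    then obtain e where "e \<in> H" by auto
    then have "{f \<in> H. (e, f) \<in> (edge_adj ends H)\<^sup>*} \<in> components ends H"
      unfolding components_def by auto
    then show ?thesis using H unfolding X_poset_def by blast
  qed
  have fQ: "core ends H \<in> C_poset ends E" if "H \<in> X_poset ends E" for H
  proof -
    have H: "H \<subseteq> E" "H \<noteq> E" "H \<noteq> {}" and "\<exists>C\<in>components ends H. nontrivial_pi1 ends C"
      using that unfolding X_poset_def by auto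
    then obtain C where C: "C \<in> components ends H" "nontrivial_pi1 ends C" by blast
    have fH: "finite H" using H(1) fE finite_subset by auto
    have "C \<subseteq> H" "C \<noteq> {}" using comp_props[OF C(1)] by auto
    moreover have "finite C" using \<open>C \<subseteq> H\<close> fH finite_subset by auto
    ultimately obtain K where K: "K \<subseteq> C" "K \<noteq> {}" "good ends K"
      using exists_good[of C ends] C(2) unfolding nontrivial_pi1_def by blast
    then have "K \<subseteq> core ends H" using \<open>C \<subseteq> H\<close> good_sub_core[of K H ends] by auto
    then have ne: "core ends H \<noteq> {}" using K by auto
    have sub: "core ends H \<subseteq> E" using core_sub[of ends H] H(1) by (rule order_trans)
    have neq: "core ends H \<noteq> E" using core_sub[of ends H] H(1,2) by blast
    have gc: "good ends (core ends H)" using good_core[OF fH] .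
    have fc: "finite (core ends H)" using sub fE finite_subset by auto
    have "\<forall>C\<in>components ends (core ends H). nontrivial_pi1 ends C"
      using good_comp_nontrivial[OF fc gc] by blast
    moreover have "\<forall>v\<in>sub_verts ends (core ends H). valence ends (core ends H) v \<noteq> 1"
      using gc unfolding good_def by fastforce
    ultimately show ?thesis using ne sub neq unfolding C_poset_def core_subgraph_def by simp
  qed
  have fid: "core ends H = H" if "H \<in> C_poset ends E" for H
  proof -
    have H: "H \<subseteq> E" "\<forall>v\<in>sub_verts ends H. valence ends H v \<noteq> 1"
      using that unfolding C_poset_def core_subgraph_def by auto
    have fH: "finite H" using H(1) fE finite_subset by auto
    have "good ends H" unfolding good_def
    proof
      fix v assume v: "v \<in> sub_verts ends H"
      show "2 \<le> valence ends H v" using valence_pos[OF fH v] H(2) v by fastforce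
    qed
    then have "H \<subseteq> core ends H" by (rule good_sub_core[OF order_refl])
    then show ?thesis using core_sub[of ends H] by (rule antisym[rotated])
  qed
  have finX: "finite (X_poset ends E)"
    by (rule finite_subset[of _ "Pow E"]) (use fE in \<open>auto simp: X_poset_def\<close>)
  interpret retr "X_poset ends E" "C_poset ends E" "core ends"
  proof
    show "finite (X_poset ends E)" by (rule finX)
    show "C_poset ends E \<subseteq> X_poset ends E" using QX by (rule subsetI)
    show "\<And>x. x \<in> X_poset ends E \<Longrightarrow> core ends x \<in> C_poset ends E" by (rule fQ)
    show "\<And>x. x \<in> X_poset ends E \<Longrightarrow> core ends x \<subseteq> x" by (rule core_sub)
    show "\<And>x y. x \<in> X_poset ends E \<Longrightarrow> y \<in> X_poset ends E \<Longrightarrow> x \<subseteq> y \<Longrightarrow> core ends x \<subseteq> core ends y"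
      by (rule core_mono)
    show "\<And>x. x \<in> C_poset ends E \<Longrightarrow> core ends x = x" by (rule fid)
  qed
  show ?thesis by (rule deform)
qed

end
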